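(* Let $d\ge1$, let $D\subset\mathbb{R}^d$ be Lebesgue measurable, let $f:D\to\mathbb{R}$ be bounded, let $r>0$ and let $0<\alpha\le 1$. Then $$|osc_r f|_{\alpha;gH}\le 2\Big(\sup_D f-\inf_D f\Big)\,\mu(Conv(D))\left(\frac{2d+1}{r}\right)^{\alpha},$$ where $Conv(D)$ is the convex hull of $D$.
   Context: $B_r(x):=\{y\in\mathbb{R}^d: |y-x|<r\}$ is the open Euclidean ball. For a function $g:D\to\mathbb{R}$ and $\rho>0$, the $\rho$-oscillation is $(osc_\rho g)(x):=\sup_{y\in B_\rho(x)\cap D} g(y)-\inf_{y\in B_\rho(x)\cap D} g(y)$ for $x\in D$ (a Lebesgue measurable function $D\to[0,\infty]$). Fix a constant $c>0$ and let $\mu=c\cdot Leb$, where $Leb$ is Lebesgue measure on $\mathbb{R}^d$. For $0<\alpha\le1$, the generalized $\alpha$-Hölder seminorm of $g:D\to\mathbb{R}$ is $$|g|_{\alpha;gH}:=\sup_{\rho>0}\frac{1}{\rho^{\alpha}}\int_D (osc_\rho g)(x)\,\mathrm{d}\mu(x).$$ In the claim this is applied to $g=osc_r f$ (which is real-valued since $f$ is bounded). *)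

theory Defs
  imports "HOL-Analysis.Analysis"
begin

definition osc :: "real \<Rightarrow> ('a::euclidean_space) set \<Rightarrow> ('a \<Rightarrow> real) \<Rightarrow> 'a \<Rightarrow> real" where
  "osc \<rho> D g x = Sup (g ` (ball x \<rho> \<inter> D)) - Inf (g ` (ball x \<rho> \<inter> D))"

text \<open>Generalized alpha-Hoelder seminorm w.r.t. mu = c * Lebesgue measure.\<close>
definition gH_seminorm :: "real \<Rightarrow> real \<Rightarrow> ('a::euclidean_space) set \<Rightarrow> ('a \<Rightarrow> real) \<Rightarrow> ennreal" where
  "gH_seminorm c \<alpha> D g =
     (SUP \<rho>\<in>{0<..}. ennreal (1 / \<rho> powr \<alpha>) *
        (ennreal c * (\<integral>\<^sup>+ x\<in>D. ennreal (osc \<rho> D g x) \<partial>lebesgue)))"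

end

theory Submission
  imports Defs
begin


lemma halfspace_scale:
  fixes a b x :: "'a::real_inner"
  assumes "0 < \<mu>" "\<mu> \<le> 1"
  shows "\<mu> * ((dist x b)^2 - (dist x a)^2) \<le> (dist (a + \<mu> *\<^sub>R (x - a)) b)^2 - (dist (a + \<mu> *\<^sub>R (x - a)) a)^2"
proof -
  define u where "u = x - a"
  define w where "w = a - b"
  have xb: "x - b = w + u" by (simp add: u_def w_def)
  have yb: "a + \<mu> *\<^sub>R (x - a) - b = w + \<mu> *\<^sub>R u" by (simp add: u_def w_def)
  have ya: "a + \<mu> *\<^sub>R (x - a) - a = \<mu> *\<^sub>R u" by (simp add: u_def)
  have e1: "(dist x b)^2 = inner w w + 2 * inner w u + inner u u"
    unfolding dist_norm power2_norm_eq_inner xb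
    by (simp add: inner_add_left inner_add_right inner_commute[of u w])
  have e2: "(dist x a)^2 = inner u u"
    unfolding dist_norm power2_norm_eq_inner u_def by simp
  have e3: "(dist (a + \<mu> *\<^sub>R (x - a)) b)^2 = inner w w + 2 * \<mu> * inner w u + \<mu> * \<mu> * inner u u"
    unfolding dist_norm power2_norm_eq_inner yb
    by (simp add: inner_add_left inner_add_right inner_commute[of u w] algebra_simps)
  have e4: "(dist (a + \<mu> *\<^sub>R (x - a)) a)^2 = \<mu> * \<mu> * inner u u"
    unfolding dist_norm power2_norm_eq_inner ya by simp
  have "inner w w \<ge> 0" by simp
  hence "\<mu> * inner w w \<le> inner w w" using assms by (simp add: mult_left_le_one_le)
  thus ?thesis unfolding e1 e2 e3 e4 by (simp add: algebra_simps)
qed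

lemma dist_scale_le:
  fixes a b x :: "'a::real_inner"
  assumes "0 < \<mu>" "\<mu> \<le> 1" "dist x a \<le> dist x b"
  shows "dist (a + \<mu> *\<^sub>R (x - a)) a \<le> dist (a + \<mu> *\<^sub>R (x - a)) b"
proof -
  define y where "y = a + \<mu> *\<^sub>R (x - a)"
  have h: "\<mu> * ((dist x b)^2 - (dist x a)^2) \<le> (dist y b)^2 - (dist y a)^2"
    using halfspace_scale[OF assms(1,2), of x b a] unfolding y_def .
  have "(dist x a)^2 \<le> (dist x b)^2" using assms by (intro power_mono) auto
  hence "0 \<le> \<mu> * ((dist x b)^2 - (dist x a)^2)" using assms by simp
  hence "(dist y a)^2 \<le> (dist y b)^2" using h by linarith
  thus ?thesis unfolding y_def[symmetric] by (rule power2_le_imp_le) simp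
qed

lemma dist_scale_less:
  fixes a b x :: "'a::real_inner"
  assumes "0 < \<mu>" "\<mu> \<le> 1" "dist x a < dist x b"
  shows "dist (a + \<mu> *\<^sub>R (x - a)) a < dist (a + \<mu> *\<^sub>R (x - a)) b"
proof -
  define y where "y = a + \<mu> *\<^sub>R (x - a)"
  have h: "\<mu> * ((dist x b)^2 - (dist x a)^2) \<le> (dist y b)^2 - (dist y a)^2"
    using halfspace_scale[OF assms(1,2), of x b a] unfolding y_def .
  have "(dist x a)^2 < (dist x b)^2" using assms by (intro power_strict_mono) auto
  hence "0 < \<mu> * ((dist x b)^2 - (dist x a)^2)" using assms by simp
  hence "(dist y a)^2 < (dist y b)^2" using h by linarith
  thus ?thesis unfolding y_def[symmetric] by (rule power2_less_imp_less) simp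
qed

lemma open_leb: "open S \<Longrightarrow> (S::'a::euclidean_space set) \<in> sets lebesgue"
  using borel_open by auto

lemma closed_leb: "closed S \<Longrightarrow> (S::'a::euclidean_space set) \<in> sets lebesgue"
  using borel_closed by auto

lemma finite_balls_scale:
  fixes e :: "nat \<Rightarrow> 'a::euclidean_space"
  assumes Kc: "convex K" and Km: "K \<in> sets lebesgue" and eK: "\<And>i. i < n \<Longrightarrow> e i \<in> K"
    and mu: "0 < \<mu>" "\<mu> \<le> 1"
  shows "ennreal (\<mu> ^ DIM('a)) * emeasure lebesgue (K \<inter> (\<Union>i<n. ball (e i) R))
         \<le> emeasure lebesgue (K \<inter> (\<Union>i<n. ball (e i) (\<mu> * R)))"
proof -
  define cell where "cell i = {x. \<forall>j<n. dist x (e i) \<le> dist x (e j) \<and> (j < i \<longrightarrow> dist x (e i) < dist x (e j))}" for i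
  define A where "A s i = K \<inter> cell i \<inter> ball (e i) s" for s i
  have cell_meas: "cell i \<in> sets lebesgue" for i
  proof -
    have eq: "cell i = (\<Inter>j\<in>{..<n}. {x. dist x (e i) \<le> dist x (e j)}) \<inter> (\<Inter>j\<in>{..<n} \<inter> {..<i}. {x. dist x (e i) < dist x (e j)})"
      unfolding cell_def by auto
    have c: "closed (\<Inter>j\<in>{..<n}. {x. dist x (e i) \<le> dist x (e j)})"
      by (intro closed_INT ballI closed_Collect_le continuous_intros)
    have o: "open (\<Inter>j\<in>{..<n} \<inter> {..<i}. {x. dist x (e i) < dist x (e j)})"
      by (intro open_INT finite_Int ballI open_Collect_less continuous_intros) auto
    show ?thesis unfolding eq using closed_leb[OF c] open_leb[OF o] by auto
  qed
  have Ameas: "A s i \<in> sets lebesgue" for s i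
    unfolding A_def using Km cell_meas open_leb[OF open_ball] by auto
  have disj: "disjoint_family_on (A s) {..<n}" for s
    unfolding disjoint_family_on_def
  proof (intro ballI impI)
    fix i j assume i: "i \<in> {..<n}" and j: "j \<in> {..<n}" and ij: "i \<noteq> j"
    show "A s i \<inter> A s j = {}"
    proof (rule ccontr)
      assume "A s i \<inter> A s j \<noteq> {}"
      then obtain x where x: "x \<in> cell i" "x \<in> cell j" unfolding A_def by auto
      show False
      proof (cases "j < i")
        case True
        then have "dist x (e i) < dist x (e j)" using x(1) j unfolding cell_def by auto
        moreover have "dist x (e j) \<le> dist x (e i)" using x(2) i unfolding cell_def by auto
        ultimately show False by simp
      next
        case False
        then have "i < j" using ij by simp
        then have "dist x (e j) < dist x (e i)" using x(2) i unfolding cell_def by auto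
        moreover have "dist x (e i) \<le> dist x (e j)" using x(1) j unfolding cell_def by auto
        ultimately show False by simp
      qed
    qed
  qed
  have cover: "K \<inter> (\<Union>i<n. ball (e i) s) = (\<Union>i<n. A s i)" for s
  proof
    show "(\<Union>i<n. A s i) \<subseteq> K \<inter> (\<Union>i<n. ball (e i) s)" unfolding A_def by auto
    show "K \<inter> (\<Union>i<n. ball (e i) s) \<subseteq> (\<Union>i<n. A s i)"
    proof
      fix x assume x: "x \<in> K \<inter> (\<Union>i<n. ball (e i) s)"
      then obtain j where j: "j < n" "dist (e j) x < s" by auto
      define m where "m = Min ((\<lambda>j. dist x (e j)) ` {..<n})"
      have "m \<in> (\<lambda>j. dist x (e j)) ` {..<n}" unfolding m_def using j by (intro Min_in) auto
      then have ex: "\<exists>i. i < n \<and> dist x (e i) = m" by auto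
      define i where "i = (LEAST i. i < n \<and> dist x (e i) = m)"
      have i: "i < n \<and> dist x (e i) = m" unfolding i_def by (rule LeastI_ex[OF ex])
      have mle: "m \<le> dist x (e k)" if "k < n" for k unfolding m_def using that by (intro Min_le) auto
      have xc: "x \<in> cell i" unfolding cell_def
      proof (intro CollectI allI impI)
        fix k assume k: "k < n"
        have le: "dist x (e i) \<le> dist x (e k)" using i mle[OF k] by simp
        moreover have "k < i \<longrightarrow> dist x (e i) < dist x (e k)"
        proof
          assume ki: "k < i"
          have "\<not> (k < n \<and> dist x (e k) = m)"
            using not_less_Least[of k "\<lambda>i. i < n \<and> dist x (e i) = m"] ki unfolding i_def by blast
          then have "dist x (e k) \<noteq> dist x (e i)" using k i by simp
          then show "dist x (e i) < dist x (e k)" using le by (simp add: order_less_le)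
        qed
        ultimately show "dist x (e i) \<le> dist x (e k) \<and> (k < i \<longrightarrow> dist x (e i) < dist x (e k))"
          by simp
      qed
      have "dist x (e i) \<le> dist x (e j)" using i mle[OF j(1)] by simp
      then have "dist (e i) x < s" using j(2) by (simp add: dist_commute)
      then show "x \<in> (\<Union>i<n. A s i)" using x i xc unfolding A_def by auto
    qed
  qed
  define h where "h i x = \<mu> *\<^sub>R x + (1 - \<mu>) *\<^sub>R e i" for i x
  have himg: "h i ` A R i \<subseteq> A (\<mu> * R) i" if i: "i < n" for i
  proof
    fix y assume "y \<in> h i ` A R i"
    then obtain x where x: "x \<in> A R i" "y = h i x" by auto
    have y: "y = e i + \<mu> *\<^sub>R (x - e i)" using x(2) unfolding h_def by (simp add: algebra_simps)
    have "y = (1 - \<mu>) *\<^sub>R e i + \<mu> *\<^sub>R x" using x(2) unfolding h_def by (simp add: algebra_simps)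
    moreover have "x \<in> K" using x(1) unfolding A_def by auto
    ultimately have yK: "y \<in> K" using convexD[OF Kc eK[OF i], of x "1 - \<mu>" \<mu>] mu by auto
    have xcell: "x \<in> cell i" using x(1) unfolding A_def by auto
    have ycell: "y \<in> cell i" unfolding cell_def
    proof (intro CollectI allI impI conjI)
      fix k assume k: "k < n"
      show "dist y (e i) \<le> dist y (e k)"
        unfolding y by (rule dist_scale_le[OF mu]) (use xcell k in \<open>auto simp: cell_def\<close>)
      assume "k < i"
      then show "dist y (e i) < dist y (e k)"
        unfolding y by (intro dist_scale_less[OF mu]) (use xcell k in \<open>auto simp: cell_def\<close>)
    qed
    have "dist (e i) y = \<mu> * dist (e i) x" unfolding y dist_norm using mu
      by (simp add: norm_minus_commute)
    also have "\<dots> < \<mu> * R" using x(1) mu unfolding A_def by simp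
    finally show "y \<in> A (\<mu> * R) i" using yK ycell unfolding A_def by simp
  qed
  have hmeas: "emeasure lebesgue (h i ` A R i) = ennreal (\<mu> ^ DIM('a)) * emeasure lebesgue (A R i)" for i
    using emeasure_lebesgue_affine[of \<mu> "(1 - \<mu>) *\<^sub>R e i" "A R i"] mu unfolding h_def
    by simp
  have sumeq: "emeasure lebesgue (\<Union>i<n. A s i) = (\<Sum>i<n. emeasure lebesgue (A s i))" for s
    by (rule sum_emeasure[symmetric]) (use Ameas disj in auto)
  have "ennreal (\<mu> ^ DIM('a)) * emeasure lebesgue (K \<inter> (\<Union>i<n. ball (e i) R))
      = ennreal (\<mu> ^ DIM('a)) * (\<Sum>i<n. emeasure lebesgue (A R i))"
    unfolding cover sumeq ..
  also have "\<dots> = (\<Sum>i<n. emeasure lebesgue (h i ` A R i))"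
    by (simp add: hmeas sum_distrib_left)
  also have "\<dots> \<le> (\<Sum>i<n. emeasure lebesgue (A (\<mu> * R) i))"
    by (intro sum_mono emeasure_mono himg Ameas) auto
  also have "\<dots> = emeasure lebesgue (K \<inter> (\<Union>i<n. ball (e i) (\<mu> * R)))"
    unfolding cover using sum_emeasure[of "A (\<mu> * R)" "{..<n}" lebesgue] Ameas disj by auto
  finally show ?thesis .
qed

lemma balls_scale:
  fixes C K :: "'a::euclidean_space set"
  assumes Kc: "convex K" and Km: "K \<in> sets lebesgue" and CK: "C \<subseteq> K"
    and mu: "0 < \<mu>" "\<mu> \<le> 1"
  shows "ennreal (\<mu> ^ DIM('a)) * emeasure lebesgue (K \<inter> (\<Union>c\<in>C. ball c R))
         \<le> emeasure lebesgue (K \<inter> (\<Union>c\<in>C. ball c (\<mu> * R)))"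
proof -
  obtain F where F: "F \<subseteq> (\<lambda>c. ball c R) ` C" "countable F" "\<Union>F = (\<Union>c\<in>C. ball c R)"
    using Lindelof[of "(\<lambda>c. ball c R) ` C"] by auto
  then obtain C' where C': "countable C'" "C' \<subseteq> C" "F = (\<lambda>c. ball c R) ` C'"
    using countable_subset_image[of F "\<lambda>c. ball c R" C] by auto
  have U: "(\<Union>c\<in>C. ball c R) = (\<Union>c\<in>C'. ball c R)" using F C' by auto
  have "open (\<Union>c\<in>C. ball c (\<mu> * R))" by auto
  then have tgt: "K \<inter> (\<Union>c\<in>C. ball c (\<mu> * R)) \<in> sets lebesgue"
    using Km open_leb by blast
  show ?thesis
  proof (cases "C' = {}")
    case True
    then show ?thesis unfolding U by simp
  next
    case False
    define g where "g = from_nat_into C'"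
    have rg: "range g = C'" unfolding g_def using False C' by simp
    define B where "B s n = K \<inter> (\<Union>i<n. ball (g i) s)" for s n
    have Bm: "B s n \<in> sets lebesgue" for s n
      unfolding B_def using Km open_leb[of "\<Union>i<n. ball (g i) s"] by auto
    have inc: "incseq (B s)" for s
    proof (rule incseq_SucI)
      fix n show "B s n \<subseteq> B s (Suc n)" unfolding B_def by (auto intro: less_SucI)
    qed
    have UB: "(\<Union>n. B s n) = K \<inter> (\<Union>c\<in>C'. ball c s)" for s
      unfolding B_def rg[symmetric] by auto
    have "ennreal (\<mu> ^ DIM('a)) * emeasure lebesgue (K \<inter> (\<Union>c\<in>C. ball c R))
        = ennreal (\<mu> ^ DIM('a)) * (SUP n. emeasure lebesgue (B R n))"
    proof -
      have "emeasure lebesgue (\<Union>n. B R n) = (SUP n. emeasure lebesgue (B R n))"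
        by (rule SUP_emeasure_incseq[symmetric]) (use Bm inc in auto)
      then show ?thesis unfolding U UB[symmetric] by simp
    qed
    also have "\<dots> = (SUP n. ennreal (\<mu> ^ DIM('a)) * emeasure lebesgue (B R n))"
      by (simp add: SUP_mult_left_ennreal)
    also have "\<dots> \<le> (SUP n. emeasure lebesgue (B (\<mu> * R) n))"
    proof (intro SUP_mono')
      fix n
      have gK: "g i \<in> K" for i using rg C'(2) CK by auto
      show "ennreal (\<mu> ^ DIM('a)) * emeasure lebesgue (B R n) \<le> emeasure lebesgue (B (\<mu> * R) n)"
        unfolding B_def by (rule finite_balls_scale[OF Kc Km gK mu])
    qed
    also have "\<dots> \<le> emeasure lebesgue (K \<inter> (\<Union>c\<in>C. ball c (\<mu> * R)))"
    proof (intro SUP_least emeasure_mono tgt)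
      fix n show "B (\<mu> * R) n \<subseteq> K \<inter> (\<Union>c\<in>C. ball c (\<mu> * R))"
        unfolding B_def using rg C'(2) by auto
    qed
    finally show ?thesis .
  qed
qed

lemma convex_leb:
  fixes K :: "'a::euclidean_space set"
  assumes "convex K" shows "K \<in> sets lebesgue"
proof -
  have eq: "K = (\<Union>n\<in>(UNIV::nat set). K \<inter> cball 0 (real n))"
  proof
    show "K \<subseteq> (\<Union>n\<in>(UNIV::nat set). K \<inter> cball 0 (real n))"
    proof
      fix x assume "x \<in> K"
      moreover obtain n :: nat where "norm x \<le> real n" using real_arch_simple by blast
      ultimately show "x \<in> (\<Union>n\<in>(UNIV::nat set). K \<inter> cball 0 (real n))" by auto
    qed
  qed auto
  have "K \<inter> cball 0 (real n) \<in> sets lebesgue" for n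
    using measurable_convex[of "K \<inter> cball 0 (real n)"] assms
    by (auto intro: convex_Int bounded_Int)
  then have "(\<Union>n\<in>(UNIV::nat set). K \<inter> cball 0 (real n)) \<in> sets lebesgue"
    by (intro sets.countable_UN) auto
  then show ?thesis using eq by simp
qed

lemma count_bound:
  fixes u :: real assumes u: "0 \<le> u" "u \<le> real N"
  shows "u \<le> (\<Sum>k<N. if real k < u then 1 else 0::real)"
    and "(\<Sum>k<N. if real k < u then 1 else 0::real) \<le> u + 1"
proof -
  have eq: "{..<N} \<inter> {k. real k < u} = {..<nat \<lceil>u\<rceil>}"
  proof safe
    fix k assume "k < N" "real k < u"
    then have "int k < \<lceil>u\<rceil>" by (simp add: less_ceiling_iff)
    then show "k < nat \<lceil>u\<rceil>" by (simp add: zless_nat_eq_int_zless)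
  next
    fix k assume "k < nat \<lceil>u\<rceil>"
    then have "int k < \<lceil>u\<rceil>" by (simp add: zless_nat_eq_int_zless)
    then show ku: "real k < u" by (simp add: less_ceiling_iff)
    then show "k < N" using u by simp
  qed
  have s: "(\<Sum>k<N. if real k < u then 1 else 0::real) = real (nat \<lceil>u\<rceil>)"
    by (simp add: sum.If_cases eq)
  have "real (nat \<lceil>u\<rceil>) = of_int \<lceil>u\<rceil>" using u by simp
  then show "u \<le> (\<Sum>k<N. if real k < u then 1 else 0::real)"
    and "(\<Sum>k<N. if real k < u then 1 else 0::real) \<le> u + 1"
    unfolding s by (simp_all add: le_of_int_ceiling)
qed

definition lev :: "('a::euclidean_space \<Rightarrow> real) \<Rightarrow> 'a set \<Rightarrow> real \<Rightarrow> real \<Rightarrow> 'a set" where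
  "lev F D t s = (\<Union>c\<in>{y\<in>D. t < F y}. ball c s)"

lemma sup_part:
  fixes F :: "'a::euclidean_space \<Rightarrow> real"
  assumes bF: "bounded (F ` D)" and x: "x \<in> D" and s: "0 < s1" "s1 \<le> s2" and N: "0 < N"
    and m: "m = Inf (F ` D)" and dl: "\<delta> = (Sup (F ` D) - m) / real N"
  shows "Sup (F ` (ball x s2 \<inter> D)) - Sup (F ` (ball x s1 \<inter> D))
    \<le> \<delta> * (\<Sum>k<N. indicator (lev F D (m + real k * \<delta>) s2 - lev F D (m + real k * \<delta>) s1) x) + \<delta>"
proof -
  define S where "S s = Sup (F ` (ball x s \<inter> D))" for s
  have bA: "bdd_above (F ` D)" and bB: "bdd_below (F ` D)"
    using bF by (auto intro: bounded_imp_bdd_above bounded_imp_bdd_below)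
  have ne: "F ` (ball x s \<inter> D) \<noteq> {}" if "0 < s" for s
  proof -
    have "F x \<in> F ` (ball x s \<inter> D)" using x that by simp
    then show ?thesis by blast
  qed
  have bAs: "bdd_above (F ` (ball x s \<inter> D))" for s
    using bA by (rule bdd_above_mono) auto
  have Fx: "F x \<le> S s" if "0 < s" for s
    unfolding S_def using x that by (intro cSup_upper bAs) auto
  have Sle: "S s \<le> Sup (F ` D)" if "0 < s" for s
    unfolding S_def using ne[OF that] bA by (intro cSup_subset_mono) auto
  have mx: "m \<le> F x" unfolding m using x bB by (intro cInf_lower) auto
  have S12: "S s1 \<le> S s2"
    unfolding S_def using ne[OF s(1)] bAs s by (intro cSup_subset_mono) auto
  have s2: "0 < s2" using s by simp
  show ?thesis
  proof (cases "Sup (F ` D) = m")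
    case True
    then have "\<delta> = 0" using dl by simp
    moreover have "S s2 \<le> S s1" using Sle[OF s2] Fx[OF s(1)] mx True by simp
    ultimately show ?thesis unfolding S_def by simp
  next
    case False
    have "m \<le> Sup (F ` D)" using mx Sle[OF s2] Fx[OF s2] by simp
    with False have "m < Sup (F ` D)" by simp
    then have dpos: "0 < \<delta>" using dl N by simp
    have Sup_eq: "Sup (F ` D) = m + real N * \<delta>" using dl N by simp
    have mem: "x \<in> lev F D t s \<longleftrightarrow> t < S s" if "0 < s" for t s
      unfolding lev_def S_def less_cSup_iff[OF ne[OF that] bAs]
      by (auto simp: dist_commute)
    define u where "u s = (S s - m) / \<delta>" for s
    have lt: "m + real k * \<delta> < S s \<longleftrightarrow> real k < u s" for k s
      unfolding u_def using dpos by (simp add: field_simps)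
    have u0: "0 \<le> u s" "u s \<le> real N" if "0 < s" for s
      unfolding u_def using dpos Fx[OF that] mx Sle[OF that] Sup_eq
      by (simp_all add: field_simps)
    have u12: "u s1 \<le> u s2" unfolding u_def using S12 dpos by (simp add: divide_right_mono)
    have ind: "indicator (lev F D (m + real k * \<delta>) s2 - lev F D (m + real k * \<delta>) s1) x
       = (if real k < u s2 then 1 else 0) - (if real k < u s1 then 1 else (0::real))" for k
      using mem[OF s(1)] mem[OF s2] lt S12 u12 by (auto simp: indicator_def)
    have "(\<Sum>k<N. indicator (lev F D (m + real k * \<delta>) s2 - lev F D (m + real k * \<delta>) s1) x)
      = (\<Sum>k<N. if real k < u s2 then 1 else 0::real) - (\<Sum>k<N. if real k < u s1 then 1 else 0::real)"
      unfolding ind by (simp add: sum_subtractf)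
    moreover have "u s2 \<le> (\<Sum>k<N. if real k < u s2 then 1 else 0::real)"
      using count_bound(1)[OF u0[OF s2]] .
    moreover have "(\<Sum>k<N. if real k < u s1 then 1 else 0::real) \<le> u s1 + 1"
      using count_bound(2)[OF u0[OF s(1)]] .
    ultimately have "u s2 - u s1 - 1 \<le> (\<Sum>k<N. indicator (lev F D (m + real k * \<delta>) s2 - lev F D (m + real k * \<delta>) s1) x)"
      by linarith
    then have "\<delta> * (u s2 - u s1 - 1) \<le> \<delta> * (\<Sum>k<N. indicator (lev F D (m + real k * \<delta>) s2 - lev F D (m + real k * \<delta>) s1) x)"
      using dpos by (intro mult_left_mono) auto
    moreover have "\<delta> * (u s2 - u s1 - 1) = S s2 - S s1 - \<delta>"
      unfolding u_def using dpos by (simp add: field_simps)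
    ultimately show ?thesis unfolding S_def by linarith
  qed
qed

lemma Inf_neg_img: "Inf (f ` A) = - Sup ((\<lambda>y. - f y) ` A)" for f :: "'b \<Rightarrow> real"
  by (simp add: Inf_real_def image_image)

lemma osc_osc_le:
  fixes f :: "'a::euclidean_space \<Rightarrow> real"
  assumes bF: "bounded (f ` D)" and x: "x \<in> D" and \<rho>: "0 < \<rho>" "\<rho> < r"
  shows "osc \<rho> D (osc r D f) x
    \<le> (Sup (f ` (ball x (r + \<rho>) \<inter> D)) - Inf (f ` (ball x (r + \<rho>) \<inter> D)))
      - (Sup (f ` (ball x (r - \<rho>) \<inter> D)) - Inf (f ` (ball x (r - \<rho>) \<inter> D)))"
proof -
  have bA: "bdd_above (f ` D)" and bB: "bdd_below (f ` D)"
    using bF by (auto intro: bounded_imp_bdd_above bounded_imp_bdd_below)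
  have bAs: "bdd_above (f ` (ball z s \<inter> D))" for z s
    using bA by (rule bdd_above_mono) auto
  have bBs: "bdd_below (f ` (ball z s \<inter> D))" for z s
    using bB by (rule bdd_below_mono) auto
  define P where "P = Sup (f ` (ball x (r + \<rho>) \<inter> D)) - Inf (f ` (ball x (r + \<rho>) \<inter> D))"
  define Q where "Q = Sup (f ` (ball x (r - \<rho>) \<inter> D)) - Inf (f ` (ball x (r - \<rho>) \<inter> D))"
  have nex: "f ` (ball x (r - \<rho>) \<inter> D) \<noteq> {}"
  proof -
    have "f x \<in> f ` (ball x (r - \<rho>) \<inter> D)" using x \<rho> by simp
    then show ?thesis by blast
  qed
  have gy: "Q \<le> osc r D f y \<and> osc r D f y \<le> P" if y: "y \<in> ball x \<rho> \<inter> D" for y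
  proof -
    have ney: "f ` (ball y r \<inter> D) \<noteq> {}"
    proof -
      have "f y \<in> f ` (ball y r \<inter> D)" using y \<rho> by simp
      then show ?thesis by blast
    qed
    have sub1: "ball y r \<inter> D \<subseteq> ball x (r + \<rho>) \<inter> D"
    proof
      fix z assume z: "z \<in> ball y r \<inter> D"
      have "dist x z \<le> dist x y + dist y z" by (rule dist_triangle)
      also have "\<dots> < \<rho> + r" using y z by (intro add_strict_mono) (auto simp: dist_commute)
      finally show "z \<in> ball x (r + \<rho>) \<inter> D" using z by simp
    qed
    have sub2: "ball x (r - \<rho>) \<inter> D \<subseteq> ball y r \<inter> D"
    proof
      fix z assume z: "z \<in> ball x (r - \<rho>) \<inter> D"
      have "dist y z \<le> dist y x + dist x z" by (rule dist_triangle)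
      also have "\<dots> < \<rho> + (r - \<rho>)" using y z by (intro add_strict_mono) (auto simp: dist_commute)
      finally show "z \<in> ball y r \<inter> D" using z by simp
    qed
    have "Sup (f ` (ball y r \<inter> D)) \<le> Sup (f ` (ball x (r + \<rho>) \<inter> D))"
      using sub1 ney bAs by (intro cSup_subset_mono) auto
    moreover have "Inf (f ` (ball x (r + \<rho>) \<inter> D)) \<le> Inf (f ` (ball y r \<inter> D))"
      using sub1 ney bBs by (intro cInf_superset_mono) auto
    moreover have "Sup (f ` (ball x (r - \<rho>) \<inter> D)) \<le> Sup (f ` (ball y r \<inter> D))"
      using sub2 nex bAs by (intro cSup_subset_mono) auto
    moreover have "Inf (f ` (ball y r \<inter> D)) \<le> Inf (f ` (ball x (r - \<rho>) \<inter> D))"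
      using sub2 nex bBs by (intro cInf_superset_mono) auto
    ultimately show ?thesis unfolding osc_def P_def Q_def by linarith
  qed
  have neg: "osc r D f ` (ball x \<rho> \<inter> D) \<noteq> {}"
  proof -
    have "osc r D f x \<in> osc r D f ` (ball x \<rho> \<inter> D)" using x \<rho> by simp
    then show ?thesis by blast
  qed
  have "Sup (osc r D f ` (ball x \<rho> \<inter> D)) \<le> P"
    using neg gy by (intro cSup_least) auto
  moreover have "Q \<le> Inf (osc r D f ` (ball x \<rho> \<inter> D))"
    using neg gy by (intro cInf_greatest) auto
  ultimately show ?thesis unfolding osc_def[of \<rho>] P_def[symmetric] Q_def[symmetric] by linarith
qed

lemma osc_le_range:
  fixes f :: "'a::euclidean_space \<Rightarrow> real"
  assumes bF: "bounded (f ` D)" and x: "x \<in> D" and \<rho>: "0 < \<rho>"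
  shows "0 \<le> osc \<rho> D f x \<and> osc \<rho> D f x \<le> Sup (f ` D) - Inf (f ` D)"
proof -
  have bA: "bdd_above (f ` D)" and bB: "bdd_below (f ` D)"
    using bF by (auto intro: bounded_imp_bdd_above bounded_imp_bdd_below)
  have bAs: "bdd_above (f ` (ball x \<rho> \<inter> D))"
    using bA by (rule bdd_above_mono) auto
  have bBs: "bdd_below (f ` (ball x \<rho> \<inter> D))"
    using bB by (rule bdd_below_mono) auto
  have fx: "f x \<in> f ` (ball x \<rho> \<inter> D)" using x \<rho> by simp
  then have ne: "f ` (ball x \<rho> \<inter> D) \<noteq> {}" by blast
  have "Inf (f ` (ball x \<rho> \<inter> D)) \<le> f x" using fx bBs by (rule cInf_lower)
  moreover have "f x \<le> Sup (f ` (ball x \<rho> \<inter> D))" using fx bAs by (rule cSup_upper)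
  moreover have "Sup (f ` (ball x \<rho> \<inter> D)) \<le> Sup (f ` D)"
    using ne bA by (intro cSup_subset_mono) auto
  moreover have "Inf (f ` D) \<le> Inf (f ` (ball x \<rho> \<inter> D))"
    using ne bB by (intro cInf_superset_mono) auto
  ultimately show ?thesis unfolding osc_def by linarith
qed

lemma level_meas:
  fixes D K C :: "'a::euclidean_space set"
  assumes Kc: "convex K" and Km: "K \<in> sets lebesgue" and Kf: "emeasure lebesgue K < \<infinity>"
    and DK: "D \<subseteq> K" and Dm: "D \<in> sets lebesgue" and CD: "C \<subseteq> D"
    and \<rho>: "0 < \<rho>" "\<rho> < r"
  shows "measure lebesgue (D \<inter> ((\<Union>c\<in>C. ball c (r + \<rho>)) - (\<Union>c\<in>C. ball c (r - \<rho>))))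
     \<le> (1 - ((r - \<rho>) / (r + \<rho>)) ^ DIM('a)) * measure lebesgue K"
proof -
  define \<mu> where "\<mu> = (r - \<rho>) / (r + \<rho>)"
  have mu: "0 < \<mu>" "\<mu> \<le> 1" unfolding \<mu>_def using \<rho> by auto
  have muR: "\<mu> * (r + \<rho>) = r - \<rho>" unfolding \<mu>_def using \<rho> by simp
  define P where "P = K \<inter> (\<Union>c\<in>C. ball c (r + \<rho>))"
  define Q where "Q = K \<inter> (\<Union>c\<in>C. ball c (r - \<rho>))"
  have oP: "open (\<Union>c\<in>C. ball c (r + \<rho>))" and oQ: "open (\<Union>c\<in>C. ball c (r - \<rho>))" by auto
  have Pm: "P \<in> sets lebesgue" unfolding P_def using Km open_leb[OF oP] by blast
  have Qm: "Q \<in> sets lebesgue" unfolding Q_def using Km open_leb[OF oQ] by blast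
  have Kfm: "K \<in> fmeasurable lebesgue" using Km Kf by (simp add: fmeasurable_def)
  have Pf: "P \<in> fmeasurable lebesgue" unfolding P_def using Pm Kfm
    by (intro fmeasurableI2[OF Kfm]) (auto simp: P_def)
  have Qf: "Q \<in> fmeasurable lebesgue"
    by (intro fmeasurableI2[OF Kfm]) (auto simp: Q_def Qm[unfolded Q_def])
  have QP: "Q \<subseteq> P" unfolding P_def Q_def using \<rho> by auto
  have sc: "ennreal (\<mu> ^ DIM('a)) * emeasure lebesgue P \<le> emeasure lebesgue Q"
    unfolding P_def Q_def muR[symmetric]
    by (rule balls_scale[OF Kc Km _ mu]) (use CD DK in auto)
  have "ennreal (\<mu> ^ DIM('a) * measure lebesgue P) \<le> ennreal (measure lebesgue Q)"
    using sc Pf Qf mu by (simp add: emeasure_eq_measure2 ennreal_mult)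
  then have "(0 \<le> measure lebesgue Q \<and> \<mu> ^ DIM('a) * measure lebesgue P \<le> measure lebesgue Q) \<or> (\<mu> ^ DIM('a) * measure lebesgue P \<le> 0 \<and> measure lebesgue Q \<le> 0)"
    by (simp only: ennreal_le_iff2)
  then have sc': "\<mu> ^ DIM('a) * measure lebesgue P \<le> measure lebesgue Q"
    using measure_nonneg[of lebesgue Q] by force
  have "measure lebesgue (D \<inter> ((\<Union>c\<in>C. ball c (r + \<rho>)) - (\<Union>c\<in>C. ball c (r - \<rho>))))
     \<le> measure lebesgue (P - Q)"
  proof (rule measure_mono_fmeasurable)
    show "D \<inter> ((\<Union>c\<in>C. ball c (r + \<rho>)) - (\<Union>c\<in>C. ball c (r - \<rho>))) \<in> sets lebesgue"
      using Dm open_leb[OF oP] open_leb[OF oQ] by auto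
    show "P - Q \<in> fmeasurable lebesgue" using Pf Qf by auto
    show "D \<inter> ((\<Union>c\<in>C. ball c (r + \<rho>)) - (\<Union>c\<in>C. ball c (r - \<rho>))) \<subseteq> P - Q"
      using DK unfolding P_def Q_def by auto
  qed
  also have "\<dots> = measure lebesgue P - measure lebesgue Q"
    using Pf Qm QP by (intro measure_Diff) (auto simp: fmeasurable_def)
  also have "\<dots> \<le> (1 - \<mu> ^ DIM('a)) * measure lebesgue P" using sc' by (simp add: algebra_simps)
  also have "\<dots> \<le> (1 - \<mu> ^ DIM('a)) * measure lebesgue K"
  proof (rule mult_left_mono)
    show "measure lebesgue P \<le> measure lebesgue K"
      by (rule measure_mono_fmeasurable) (use Pm Kfm in \<open>auto simp: P_def\<close>)
    show "0 \<le> 1 - \<mu> ^ DIM('a)" using mu by (simp add: power_le_one)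
  qed
  finally show ?thesis unfolding \<mu>_def .
qed

lemma key_bound:
  fixes D :: "'a::euclidean_space set" and f :: "'a \<Rightarrow> real"
  assumes Dm: "D \<in> sets lebesgue" and bF: "bounded (f ` D)" and DK: "D \<subseteq> K"
    and Kc: "convex K" and Km: "K \<in> sets lebesgue" and Kf: "emeasure lebesgue K < \<infinity>"
    and \<rho>: "0 < \<rho>" "\<rho> < r" and N: "0 < N" and Dne: "D \<noteq> {}"
  defines "M \<equiv> Sup (f ` D) - Inf (f ` D)"
  defines "q \<equiv> (1 - ((r - \<rho>) / (r + \<rho>)) ^ DIM('a)) * measure lebesgue K"
  shows "(\<integral>\<^sup>+ x\<in>D. ennreal (osc \<rho> D (osc r D f) x) \<partial>lebesgue)
         \<le> ennreal (2 * M * q + 2 * M * measure lebesgue K / real N)"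
proof -
  define \<delta> where "\<delta> = M / real N"
  define m1 where "m1 = Inf (f ` D)"
  define f2 where "f2 = (\<lambda>y. - f y)"
  define m2 where "m2 = Inf (f2 ` D)"
  have bF2: "bounded (f2 ` D)"
  proof -
    have "f2 ` D = uminus ` (f ` D)" unfolding f2_def by (simp add: image_image)
    then show ?thesis using bF by simp
  qed
  have inf1: "Inf (f ` (A::'a set)) = - Sup (f2 ` A)" for A unfolding f2_def by (rule Inf_neg_img)
  have inf2: "Inf (f2 ` (A::'a set)) = - Sup (f ` A)" for A
    using Inf_neg_img[of f2 A] unfolding f2_def by simp
  have d1: "\<delta> = (Sup (f ` D) - m1) / real N" unfolding \<delta>_def M_def m1_def ..
  have d2: "\<delta> = (Sup (f2 ` D) - m2) / real N" unfolding \<delta>_def M_def m2_def inf1 inf2 by simp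
  have M0: "0 \<le> M"
  proof -
    obtain x where x: "x \<in> D" using Dne by auto
    show ?thesis unfolding M_def using osc_le_range[OF bF x zero_less_one] by simp
  qed
  have d0: "0 \<le> \<delta>" unfolding \<delta>_def using M0 by simp
  define A where "A k = lev f D (m1 + real k * \<delta>) (r + \<rho>) - lev f D (m1 + real k * \<delta>) (r - \<rho>)" for k
  define B where "B k = lev f2 D (m2 + real k * \<delta>) (r + \<rho>) - lev f2 D (m2 + real k * \<delta>) (r - \<rho>)" for k
  have rr: "0 < r - \<rho>" "r - \<rho> \<le> r + \<rho>" using \<rho> by auto
  have pw: "osc \<rho> D (osc r D f) x \<le> \<delta> * (\<Sum>k<N. indicator (A k) x) + \<delta> + (\<delta> * (\<Sum>k<N. indicator (B k) x) + \<delta>)"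
    if x: "x \<in> D" for x
  proof -
    have 1: "osc \<rho> D (osc r D f) x
      \<le> (Sup (f ` (ball x (r + \<rho>) \<inter> D)) - Inf (f ` (ball x (r + \<rho>) \<inter> D)))
      - (Sup (f ` (ball x (r - \<rho>) \<inter> D)) - Inf (f ` (ball x (r - \<rho>) \<inter> D)))"
      by (rule osc_osc_le[OF bF x \<rho>])
    have 2: "Sup (f ` (ball x (r + \<rho>) \<inter> D)) - Sup (f ` (ball x (r - \<rho>) \<inter> D))
      \<le> \<delta> * (\<Sum>k<N. indicator (A k) x) + \<delta>"
      unfolding A_def by (rule sup_part[OF bF x rr N m1_def d1])
    have 3: "Sup (f2 ` (ball x (r + \<rho>) \<inter> D)) - Sup (f2 ` (ball x (r - \<rho>) \<inter> D))
      \<le> \<delta> * (\<Sum>k<N. indicator (B k) x) + \<delta>"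
      unfolding B_def by (rule sup_part[OF bF2 x rr N m2_def d2])
    show ?thesis using 1 2 3 unfolding inf1 by linarith
  qed
  have levm: "lev F D t s \<in> sets lebesgue" for F t s
  proof -
    have "open (lev F D t s)" unfolding lev_def by auto
    then show ?thesis by (rule open_leb)
  qed
  have Am: "D \<inter> A k \<in> sets lebesgue" for k unfolding A_def using Dm levm by auto
  have Bm: "D \<inter> B k \<in> sets lebesgue" for k unfolding B_def using Dm levm by auto
  have finD: "emeasure lebesgue X < \<infinity>" if "X \<subseteq> D" "X \<in> sets lebesgue" for X
  proof -
    have "emeasure lebesgue X \<le> emeasure lebesgue K" using that DK Km by (intro emeasure_mono) auto
    then show ?thesis using Kf by simp
  qed
  have Af: "emeasure lebesgue (D \<inter> A k) < \<infinity>" for k using finD Am by auto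
  have Bf: "emeasure lebesgue (D \<inter> B k) < \<infinity>" for k using finD Bm by auto
  have Df: "emeasure lebesgue D < \<infinity>" using finD Dm by auto
  define h where "h x = \<delta> * (\<Sum>k<N. indicator (D \<inter> A k) x) + \<delta> * (\<Sum>k<N. indicator (D \<inter> B k) x)
      + 2 * \<delta> * indicator D x" for x :: 'a
  have hint: "integrable lebesgue h" unfolding h_def
    using Am Bm Af Bf Dm Df
    by (intro Bochner_Integration.integrable_add integrable_mult_right Bochner_Integration.integrable_sum
        integrable_real_indicator) auto
  have h0: "0 \<le> h x" for x unfolding h_def using d0 by (auto intro!: add_nonneg_nonneg mult_nonneg_nonneg sum_nonneg)
  have "(\<integral>\<^sup>+ x\<in>D. ennreal (osc \<rho> D (osc r D f) x) \<partial>lebesgue) \<le> (\<integral>\<^sup>+ x. ennreal (h x) \<partial>lebesgue)"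
  proof (intro nn_integral_mono)
    fix x :: 'a
    show "ennreal (osc \<rho> D (osc r D f) x) * indicator D x \<le> ennreal (h x)"
    proof (cases "x \<in> D")
      case True
      have "h x = \<delta> * (\<Sum>k<N. indicator (A k) x) + \<delta> + (\<delta> * (\<Sum>k<N. indicator (B k) x) + \<delta>)"
        unfolding h_def using True by (simp add: indicator_def)
      then show ?thesis using True pw[OF True] by (simp add: ennreal_leI)
    next
      case False then show ?thesis by simp
    qed
  qed
  also have "\<dots> = ennreal (integral\<^sup>L lebesgue h)"
    using hint h0 by (intro nn_integral_eq_integral) auto
  also have "ennreal (integral\<^sup>L lebesgue h) \<le> ennreal (2 * M * q + 2 * M * measure lebesgue K / real N)"
  proof -
  have "integral\<^sup>L lebesgue h = \<delta> * (\<Sum>k<N. measure lebesgue (D \<inter> A k)) + \<delta> * (\<Sum>k<N. measure lebesgue (D \<inter> B k))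
      + 2 * \<delta> * measure lebesgue D"
  proof -
    have i1: "integrable lebesgue (\<lambda>x. \<delta> * (\<Sum>k<N. indicator (D \<inter> A k) x))"
      using Am Af by (intro integrable_mult_right Bochner_Integration.integrable_sum integrable_real_indicator) auto
    have i2: "integrable lebesgue (\<lambda>x. \<delta> * (\<Sum>k<N. indicator (D \<inter> B k) x))"
      using Bm Bf by (intro integrable_mult_right Bochner_Integration.integrable_sum integrable_real_indicator) auto
    have i3: "integrable lebesgue (\<lambda>x. 2 * \<delta> * indicator D x :: real)"
      using Dm Df by (intro integrable_mult_right integrable_real_indicator) auto
    have s1: "integral\<^sup>L lebesgue (\<lambda>x. \<Sum>k<N. indicator (D \<inter> A k) x :: real) = (\<Sum>k<N. measure lebesgue (D \<inter> A k))"
      using Am Af by (subst Bochner_Integration.integral_sum) auto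
    have s2: "integral\<^sup>L lebesgue (\<lambda>x. \<Sum>k<N. indicator (D \<inter> B k) x :: real) = (\<Sum>k<N. measure lebesgue (D \<inter> B k))"
      using Bm Bf by (subst Bochner_Integration.integral_sum) auto
    show ?thesis unfolding h_def
      using i1 i2 i3 s1 s2 by (simp add: Bochner_Integration.integral_add)
  qed
  also have "\<delta> * (\<Sum>k<N. measure lebesgue (D \<inter> A k)) + \<delta> * (\<Sum>k<N. measure lebesgue (D \<inter> B k))
      + 2 * \<delta> * measure lebesgue D \<le> \<delta> * (\<Sum>k<N. q) + \<delta> * (\<Sum>k<N. q) + 2 * \<delta> * measure lebesgue K"
  proof -
    have "measure lebesgue (D \<inter> A k) \<le> q" for k
      unfolding A_def lev_def q_def by (rule level_meas[OF Kc Km Kf DK Dm _ \<rho>]) auto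
    then have a: "(\<Sum>k<N. measure lebesgue (D \<inter> A k)) \<le> (\<Sum>k<N. q)" by (intro sum_mono)
    have "measure lebesgue (D \<inter> B k) \<le> q" for k
      unfolding B_def lev_def q_def by (rule level_meas[OF Kc Km Kf DK Dm _ \<rho>]) auto
    then have b: "(\<Sum>k<N. measure lebesgue (D \<inter> B k)) \<le> (\<Sum>k<N. q)" by (intro sum_mono)
    have c: "measure lebesgue D \<le> measure lebesgue K"
      using DK Dm Km Kf by (intro measure_mono_fmeasurable) (auto simp: fmeasurable_def)
    show ?thesis using a b c d0 by (intro add_mono mult_left_mono) auto
  qed
  also have "\<delta> * (\<Sum>k<N. q) + \<delta> * (\<Sum>k<N. q) + 2 * \<delta> * measure lebesgue K
      = 2 * M * q + 2 * M * measure lebesgue K / real N"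
    unfolding \<delta>_def using N by (simp add: field_simps)
  finally show ?thesis by (rule ennreal_leI)
  qed
  finally show ?thesis .
qed

lemma eps_bound:
  fixes X :: ennreal and a b :: real
  assumes "0 \<le> a" "0 \<le> b" "\<And>N::nat. 0 < N \<Longrightarrow> X \<le> ennreal (a + b / real N)"
  shows "X \<le> ennreal a"
proof (rule ennreal_le_epsilon)
  fix e :: real assume e: "0 < e"
  obtain N :: nat where N: "b / e < real N" using reals_Archimedean2 by blast
  have N0: "0 < N" using N assms(2) e
    by (metis divide_nonneg_pos not_gr_zero of_nat_0 order_less_irrefl order_le_less_trans)
  have "b / real N \<le> e" using N e N0 by (simp add: field_simps)
  then have "X \<le> ennreal (a + e)"
    using assms(3)[OF N0] by (meson add_left_mono ennreal_leI order_trans)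
  then show "X \<le> ennreal a + ennreal e" using assms(1) e by (simp add: ennreal_plus)
qed

theorem theorem1:
  fixes D :: "'a::euclidean_space set" and f :: "'a \<Rightarrow> real"
    and c r \<alpha> :: real
  assumes "c > 0"
    and "D \<in> sets lebesgue"
    and "bounded (f ` D)"
    and "r > 0"
    and "0 < \<alpha>" and "\<alpha> \<le> 1"
  shows "gH_seminorm c \<alpha> D (osc r D f)
         \<le> ennreal (2 * (Sup (f ` D) - Inf (f ` D)))
           * (ennreal c * emeasure lebesgue (convex hull D))
           * ennreal (((2 * real DIM('a) + 1) / r) powr \<alpha>)"
proof -
  note c = assms(1) and Dm = assms(2) and bF = assms(3) and r = assms(4) and al = assms(5,6)
  define K where "K = convex hull D"
  have Kc: "convex K" unfolding K_def by simp
  have Km: "K \<in> sets lebesgue" using convex_leb[OF Kc] .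
  have DK: "D \<subseteq> K" unfolding K_def by (rule hull_subset)
  define M where "M = Sup (f ` D) - Inf (f ` D)"
  define I where "I \<rho> = (\<integral>\<^sup>+ x\<in>D. ennreal (osc \<rho> D (osc r D f) x) \<partial>lebesgue)" for \<rho>
  define L where "L = ((2 * real DIM('a) + 1) / r) powr \<alpha>"
  define RHS where "RHS = ennreal (2 * M) * (ennreal c * emeasure lebesgue K) * ennreal L"
  have L0: "0 < L" unfolding L_def using r by simp
  have goal: "ennreal (1 / \<rho> powr \<alpha>) * (ennreal c * I \<rho>) \<le> RHS" if \<rho>: "0 < \<rho>" for \<rho>
  proof (cases "D = {}")
    case True
    then show ?thesis unfolding I_def by simp
  next
    case Dne: False
    then obtain x0 where x0: "x0 \<in> D" by auto
    have M0: "0 \<le> M" unfolding M_def using osc_le_range[OF bF x0 zero_less_one] by simp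
    have gb: "0 \<le> osc r D f y \<and> osc r D f y \<le> M" if "y \<in> D" for y
      unfolding M_def using osc_le_range[OF bF that r] .
    have bg: "bounded (osc r D f ` D)"
    proof -
      have "osc r D f ` D \<subseteq> {0..M}" using gb by auto
      then show ?thesis by (rule bounded_subset[OF bounded_closed_interval])
    qed
    have gSup: "Sup (osc r D f ` D) \<le> M" using Dne gb by (intro cSup_least) auto
    have gInf: "0 \<le> Inf (osc r D f ` D)" using Dne gb by (intro cInf_greatest) auto
    have osc_bnd: "osc \<rho> D (osc r D f) x \<le> M" if "x \<in> D" for x
      using osc_le_range[OF bg that \<rho>] gSup gInf by linarith
    have I_triv: "I \<rho> \<le> ennreal M * emeasure lebesgue D"
    proof -
      have "I \<rho> \<le> (\<integral>\<^sup>+ x. ennreal M * indicator D x \<partial>lebesgue)"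
        unfolding I_def
        by (intro nn_integral_mono) (auto simp: indicator_def osc_bnd intro: ennreal_leI)
      also have "\<dots> = ennreal M * emeasure lebesgue D" using Dm by (rule nn_integral_cmult_indicator)
      finally show ?thesis .
    qed
    show ?thesis
    proof (cases "emeasure lebesgue K = \<infinity>")
      case Kinf: True
      show ?thesis
      proof (cases "M = 0")
        case True
        then have "I \<rho> = 0" using I_triv by simp
        then show ?thesis by simp
      next
        case False
        then have "RHS = top" unfolding RHS_def Kinf using M0 c L0
          by (simp add: ennreal_mult_top ennreal_top_mult)
        then show ?thesis by simp
      qed
    next
      case Kfin: False
      then have Kf: "emeasure lebesgue K < \<infinity>" by (simp add: top.not_eq_extremum)
      define mK where "mK = measure lebesgue K"
      have eK: "emeasure lebesgue K = ennreal mK" unfolding mK_def using Kfin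
        by (simp add: emeasure_eq_ennreal_measure)
      have mK0: "0 \<le> mK" unfolding mK_def by simp
      have eD: "emeasure lebesgue D \<le> ennreal mK" unfolding eK[symmetric]
        using DK Km by (intro emeasure_mono) auto
      have RHS: "RHS = ennreal (2 * M * c * mK * L)" unfolding RHS_def eK
        using M0 c mK0 L0 by (simp add: ennreal_mult[symmetric] mult_ac)
      have pr: "0 < \<rho> powr \<alpha>" using \<rho> by simp
      show ?thesis
      proof (cases "r / (2 * real DIM('a) + 1) \<le> \<rho>")
        case True
        have "I \<rho> \<le> ennreal M * ennreal mK" using I_triv eD by (meson mult_left_mono order_trans zero_le)
        also have "\<dots> = ennreal (M * mK)" using M0 mK0 by (simp add: ennreal_mult)
        finally have Ib: "I \<rho> \<le> ennreal (M * mK)" .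
        have "ennreal (1 / \<rho> powr \<alpha>) * (ennreal c * I \<rho>) \<le> ennreal (1 / \<rho> powr \<alpha>) * (ennreal c * ennreal (M * mK))"
          by (intro mult_left_mono Ib) auto
        also have "\<dots> = ennreal (1 / \<rho> powr \<alpha> * c * M * mK)"
          using c M0 mK0 pr by (simp add: ennreal_mult[symmetric] mult_ac)
        also have "\<dots> \<le> ennreal (2 * M * c * mK * L)"
        proof (rule ennreal_leI)
          have "1 / \<rho> \<le> (2 * real DIM('a) + 1) / r" using True r \<rho> by (simp add: field_simps)
          then have "(1 / \<rho>) powr \<alpha> \<le> L" unfolding L_def using al \<rho> by (intro powr_mono2) auto
          then have l: "1 / \<rho> powr \<alpha> \<le> L" using \<rho> by (simp add: powr_divide)
          have "1 / \<rho> powr \<alpha> * c * M * mK = (c * M * mK) * (1 / \<rho> powr \<alpha>)" by simp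
          also have "\<dots> \<le> (c * M * mK) * L" using l c M0 mK0 by (intro mult_left_mono) auto
          also have "\<dots> \<le> (c * M * mK) * (2 * L)" using L0 c M0 mK0 by (intro mult_left_mono) auto
          finally show "1 / \<rho> powr \<alpha> * c * M * mK \<le> 2 * M * c * mK * L" by (simp add: mult_ac)
        qed
        finally show ?thesis unfolding RHS .
      next
        case False
        then have \<rho>1: "\<rho> < r / (2 * real DIM('a) + 1)" by simp
        have \<rho>r: "\<rho> < r"
        proof -
          have "r / (2 * real DIM('a) + 1) \<le> r" using r by (simp add: field_simps)
          then show ?thesis using \<rho>1 by simp
        qed
        define \<mu> where "\<mu> = (r - \<rho>) / (r + \<rho>)"
        define q where "q = (1 - \<mu> ^ DIM('a)) * mK"
        have q0: "0 \<le> q" unfolding q_def \<mu>_def using mK0 \<rho> \<rho>r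
          by (intro mult_nonneg_nonneg) (auto simp: power_le_one)
        have Iq: "I \<rho> \<le> ennreal (2 * M * q)"
        proof (rule eps_bound)
          show "0 \<le> 2 * M * q" using M0 q0 by simp
          show "0 \<le> 2 * M * mK" using M0 mK0 by simp
          fix N :: nat assume N: "0 < N"
          show "I \<rho> \<le> ennreal (2 * M * q + 2 * M * mK / real N)"
            unfolding I_def q_def \<mu>_def mK_def M_def
            by (rule key_bound[OF Dm bF DK Kc Km Kf \<rho> \<rho>r N Dne])
        qed
        have qb: "1 - \<mu> ^ DIM('a) \<le> ((2 * real DIM('a) + 1) * \<rho> / r) powr \<alpha>"
        proof -
          define y where "y = 2 * \<rho> / (r + \<rho>)"
          have mu_y: "\<mu> = 1 + (- y)" unfolding \<mu>_def y_def using \<rho> r by (simp add: field_simps)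
          have "-1 \<le> - y" unfolding y_def using \<rho> \<rho>r by (simp add: field_simps)
          then have "1 + real DIM('a) * (- y) \<le> \<mu> ^ DIM('a)" unfolding mu_y by (rule Bernoulli_inequality)
          then have "1 - \<mu> ^ DIM('a) \<le> real DIM('a) * y" by simp
          also have "\<dots> \<le> (2 * real DIM('a) + 1) * \<rho> / r"
            unfolding y_def using \<rho> r by (simp add: field_simps)
          also have "\<dots> \<le> ((2 * real DIM('a) + 1) * \<rho> / r) powr 1" using \<rho> r by simp
          also have "\<dots> \<le> ((2 * real DIM('a) + 1) * \<rho> / r) powr \<alpha>"
          proof (rule powr_mono')
            show "\<alpha> \<le> 1" using al by simp
            show "0 \<le> (2 * real DIM('a) + 1) * \<rho> / r" using \<rho> r by simp
            show "(2 * real DIM('a) + 1) * \<rho> / r \<le> 1" using \<rho>1 r by (simp add: field_simps)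
          qed
          finally show ?thesis .
        qed
        have split: "((2 * real DIM('a) + 1) * \<rho> / r) powr \<alpha> = \<rho> powr \<alpha> * L"
          unfolding L_def using \<rho> r
          by (simp add: powr_mult[symmetric] powr_divide[symmetric] field_simps)
        have "ennreal (1 / \<rho> powr \<alpha>) * (ennreal c * I \<rho>) \<le> ennreal (1 / \<rho> powr \<alpha>) * (ennreal c * ennreal (2 * M * q))"
          by (intro mult_left_mono Iq) auto
        also have "\<dots> = ennreal (1 / \<rho> powr \<alpha> * c * (2 * M * q))"
          using c pr M0 q0 by (simp add: ennreal_mult[symmetric] mult_ac)
        also have "\<dots> \<le> ennreal (2 * M * c * mK * L)"
        proof (rule ennreal_leI)
          have "1 / \<rho> powr \<alpha> * (1 - \<mu> ^ DIM('a)) \<le> 1 / \<rho> powr \<alpha> * (\<rho> powr \<alpha> * L)"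
            using qb split pr by (intro mult_left_mono) auto
          also have "\<dots> = L" using pr by simp
          finally have l: "1 / \<rho> powr \<alpha> * (1 - \<mu> ^ DIM('a)) \<le> L" .
          have "1 / \<rho> powr \<alpha> * c * (2 * M * q) = (2 * M * c * mK) * (1 / \<rho> powr \<alpha> * (1 - \<mu> ^ DIM('a)))"
            unfolding q_def by (simp add: mult_ac)
          also have "\<dots> \<le> (2 * M * c * mK) * L" using l M0 c mK0 by (intro mult_left_mono) auto
          finally show "1 / \<rho> powr \<alpha> * c * (2 * M * q) \<le> 2 * M * c * mK * L" .
        qed
        finally show ?thesis unfolding RHS .
      qed
    qed
  qed
  show ?thesis
    unfolding gH_seminorm_def
  proof (rule SUP_least)
    fix \<rho> :: real assume "\<rho> \<in> {0<..}"
    then have "0 < \<rho>" by simp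
    from goal[OF this] show "ennreal (1 / \<rho> powr \<alpha>) * (ennreal c * (\<integral>\<^sup>+ x\<in>D. ennreal (osc \<rho> D (osc r D f) x) \<partial>lebesgue))
      \<le> ennreal (2 * (Sup (f ` D) - Inf (f ` D))) * (ennreal c * emeasure lebesgue (convex hull D)) *
         ennreal (((2 * real DIM('a) + 1) / r) powr \<alpha>)"
      unfolding I_def RHS_def M_def K_def L_def .
  qed
qed

end
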